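(* In any two-player perfect-information game, with exact EPFs $U_s$ and bounds $\underline V,\overline V$ as in the context, for every state $s\in\mathcal S$ we have $\{\mu\in\mathbb R: U_s(\mu)>-\infty\}=[\underline V(s),\overline V(s)]$.
   Context: A two-player perfect-information game is a finite rooted tree with states $\mathcal S$. Its leaves $\mathcal L$ carry payoffs $r_1(\ell),r_2(\ell)$ for the leader $\mathsf P_1$ and the follower $\mathsf P_2$. Non-leaf states are partitioned into leader states $\mathcal S_1$ and follower states $\mathcal S_2$, and $\mathcal C(s)$ denotes the children of $s$. Bounds, defined by backward induction: - $\underline V(\ell)=\overline V(\ell)=r_2(\ell)$ for leaves; - $\underline V(s)=\min_{s'\in\mathcal C(s)}\underline V(s')$ for $s\in\mathcal S_1$; - $\underline V(s)=\max_{s'\in\mathcal C(s)}\underline V(s')$ for $s\in\mathcal S_2$; - $\overline V(s)=\max_{s'\in\mathcal C(s)}\overline V(s')$ for every non-leaf $s$. For $s\in\mathcal S_2$ and $s'\in\mathcal C(s)$, let $\tau(s')=\max_{s^!\in\mathcal C(s),s^!\ne s'}\underline V(s^!)$ (the maximum over the empty set is $-\infty$). Let $\beta(s')=\tau(s')$ if the parent of $s'$ is in $\mathcal S_2$, and $-\infty$ if it is in $\mathcal S_1$. Operators, for $g:\mathbb R\to\mathbb R\cup\{-\infty\}$: - $\bigwedge_i g_i$ is the pointwise infimum of all concave $h\ge\max_i g_i$; - $[g\triangleright t](\mu)=g(\mu)$ for $\mu\ge t$ and $-\infty$ otherwise. Exact Enforceable Payoff Frontiers: $U_\ell(\mu)=r_1(\ell)$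 if $\mu=r_2(\ell)$ and $-\infty$ otherwise; $U_s=\bigwedge_{s'\in\mathcal C(s)}(U_{s'}\triangleright\beta(s'))$ for non-leaf $s$. *)

theory Defs
  imports "HOL-Analysis.Analysis" "HOL-Library.Extended_Real"
begin

text \<open>Game trees: a leaf carries the payoffs (r1, r2) of leader and follower;
  an inner node is owned by the leader (P1) or the follower (P2) and has an
  ordered list of children (children at different positions are different states).\<close>

datatype player = P1 | P2

datatype gtree = Leaf real real | Node player "gtree list"

fun wf_game :: "gtree \<Rightarrow> bool" where
  "wf_game (Leaf r1 r2) = True"
| "wf_game (Node p cs) = (cs \<noteq> [] \<and> list_all wf_game cs)"

fun states :: "gtree \<Rightarrow> gtree set" where
  "states (Leaf r1 r2) = {Leaf r1 r2}"
| "states (Node p cs) = insert (Node p cs) (\<Union> (set (map states cs)))"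

fun vlow :: "gtree \<Rightarrow> real" where
  "vlow (Leaf r1 r2) = r2"
| "vlow (Node P1 cs) = Min (set (map vlow cs))"
| "vlow (Node P2 cs) = Max (set (map vlow cs))"

fun vhigh :: "gtree \<Rightarrow> real" where
  "vhigh (Leaf r1 r2) = r2"
| "vhigh (Node p cs) = Max (set (map vhigh cs))"

definition concave_ext :: "(real \<Rightarrow> ereal) \<Rightarrow> bool" where
  "concave_ext h \<longleftrightarrow> convex {(x, r::real). ereal r \<le> h x}"

definition cenv :: "(real \<Rightarrow> ereal) set \<Rightarrow> real \<Rightarrow> ereal" where
  "cenv G \<mu> = Inf {h \<mu> | h. concave_ext h \<and> (\<forall>x. h x < \<infinity>) \<and> (\<forall>g\<in>G. \<forall>x. g x \<le> h x)}"

definition trunc :: "(real \<Rightarrow> ereal) \<Rightarrow> ereal \<Rightarrow> real \<Rightarrow> ereal" where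
  "trunc g t \<mu> = (if ereal \<mu> \<ge> t then g \<mu> else -\<infinity>)"

text \<open>\<open>\<tau>\<close> of the i-th child: max of lower bounds of its siblings (Sup {} = -\<infinity>).\<close>
definition tau :: "gtree list \<Rightarrow> nat \<Rightarrow> ereal" where
  "tau cs i = Sup {ereal (vlow (cs ! j)) | j. j < length cs \<and> j \<noteq> i}"

definition beta :: "player \<Rightarrow> gtree list \<Rightarrow> nat \<Rightarrow> ereal" where
  "beta p cs i = (if p = P2 then tau cs i else -\<infinity>)"

fun epf :: "gtree \<Rightarrow> real \<Rightarrow> ereal" where
  "epf (Leaf r1 r2) = (\<lambda>\<mu>. if \<mu> = r2 then ereal r1 else -\<infinity>)"
| "epf (Node p cs) =
     cenv (set (map2 (\<lambda>i u. trunc u (beta p cs i)) [0..<length cs] (map epf cs)))"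

end

theory Submission
  imports Defs
begin

lemma cenv_upper:
  assumes "concave_ext h" "\<forall>x. h x < \<infinity>" "\<forall>g\<in>G. \<forall>x. g x \<le> h x"
  shows "cenv G \<mu> \<le> h \<mu>"
  unfolding cenv_def using assms by (auto intro!: Inf_lower)

lemma cenv_lower:
  assumes "g1 \<in> G" "g2 \<in> G" "g1 x = ereal c1" "g2 y = ereal c2" "x \<le> \<mu>" "\<mu> \<le> y"
  shows "ereal (min c1 c2) \<le> cenv G \<mu>"
proof -
  have "ereal (min c1 c2) \<le> h \<mu>" if h: "concave_ext h" "\<forall>g\<in>G. \<forall>x. g x \<le> h x" for h
  proof -
    let ?S = "{(x, r::real). ereal r \<le> h x}"
    let ?m = "min c1 c2"
    have cv: "convex ?S" using h(1) concave_ext_def by simp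
    have "ereal ?m \<le> g1 x" using assms(3) by simp
    also have "\<dots> \<le> h x" using h(2) assms(1) by blast
    finally have p1: "(x, ?m) \<in> ?S" by simp
    have "ereal ?m \<le> g2 y" using assms(4) by simp
    also have "\<dots> \<le> h y" using h(2) assms(2) by blast
    finally have p2: "(y, ?m) \<in> ?S" by simp
    show ?thesis
    proof (cases "x = y")
      case True
      then have "\<mu> = x" using assms by simp
      then show ?thesis using p1 by simp
    next
      case False
      then have xy: "x < y" using assms by simp
      define t where "t = (\<mu> - x) / (y - x)"
      have t0: "0 \<le> t" "t \<le> 1" using xy assms(5,6) by (auto simp: t_def field_simps)
      have "(1 - t) *\<^sub>R (x, ?m) + t *\<^sub>R (y, ?m) \<in> ?S"
        by (rule convexD[OF cv p1 p2]) (use t0 in auto)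
      moreover have "(1 - t) *\<^sub>R (x, ?m) + t *\<^sub>R (y, ?m) = (\<mu>, ?m)"
      proof -
        have "t * (y - x) = \<mu> - x" using xy by (simp add: t_def)
        then have "(1 - t) * x + t * y = \<mu>" by (simp add: algebra_simps)
        moreover have "(1 - t) * ?m + t * ?m = ?m" by (simp add: algebra_simps)
        ultimately show ?thesis by simp
      qed
      ultimately show ?thesis by simp
    qed
  qed
  then show ?thesis unfolding cenv_def by (auto intro!: Inf_greatest)
qed

lemma box_concave:
  "concave_ext (\<lambda>\<mu>. if a \<le> \<mu> \<and> \<mu> \<le> b then ereal M else -\<infinity>)"
proof -
  have "{(x, r::real). ereal r \<le> (if a \<le> x \<and> x \<le> b then ereal M else -\<infinity>)} = {a..b} \<times> {..M}"
    by (auto split: if_splits)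
  then show ?thesis unfolding concave_ext_def by (simp add: convex_Times)
qed

lemma wf_states: "wf_game T \<Longrightarrow> s \<in> states T \<Longrightarrow> wf_game s"
proof (induction T)
  case (Leaf x1 x2)
  then show ?case by simp
next
  case (Node p cs)
  then show ?case by (auto simp: list_all_iff)
qed

lemma set_map2_eq:
  "set (map2 (\<lambda>i u. trunc u (beta p cs i)) [0..<length cs] (map epf cs))
   = (\<lambda>i. trunc (epf (cs ! i)) (beta p cs i)) ` {0..<length cs}"
proof -
  have "map2 (\<lambda>i u. trunc u (beta p cs i)) [0..<length cs] (map epf cs)
     = map (\<lambda>i. trunc (epf (cs ! i)) (beta p cs i)) [0..<length cs]"
    by (rule nth_equalityI) auto
  then show ?thesis by simp
qed


lemma ereal_realE: "-\<infinity> < (z::ereal) \<Longrightarrow> z \<le> ereal M \<Longrightarrow> \<exists>c. z = ereal c"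
  by (cases z) auto

lemma main:
  "wf_game s \<Longrightarrow> {\<mu>::real. epf s \<mu> > -\<infinity>} = {vlow s .. vhigh s}
     \<and> (\<exists>M::real. \<forall>\<mu>. epf s \<mu> \<le> ereal M) \<and> vlow s \<le> vhigh s"
proof (induction s)
  case (Leaf r1 r2)
  then show ?case by (auto intro: exI[of _ r1])
next
  case (Node p cs)
  define n where "n = length cs"
  define a where "a = vlow (Node p cs)"
  define b where "b = vhigh (Node p cs)"
  define g where "g i = trunc (epf (cs ! i)) (beta p cs i)" for i
  have ne: "cs \<noteq> []" and wfc: "\<And>c. c \<in> set cs \<Longrightarrow> wf_game c"
    using Node.prems by (auto simp: list_all_iff)
  have npos: "0 < n" using ne n_def by simp
  have IHi: "\<And>i. i < n \<Longrightarrow> {\<mu>::real. epf (cs!i) \<mu> > -\<infinity>} = {vlow (cs!i) .. vhigh (cs!i)}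
     \<and> (\<exists>M::real. \<forall>\<mu>. epf (cs!i) \<mu> \<le> ereal M) \<and> vlow (cs!i) \<le> vhigh (cs!i)"
  proof -
    fix i assume "i < n"
    then have ci: "cs!i \<in> set cs" by (simp add: n_def)
    show "{\<mu>::real. epf (cs!i) \<mu> > -\<infinity>} = {vlow (cs!i) .. vhigh (cs!i)}
     \<and> (\<exists>M::real. \<forall>\<mu>. epf (cs!i) \<mu> \<le> ereal M) \<and> vlow (cs!i) \<le> vhigh (cs!i)"
      using Node.IH[OF ci wfc[OF ci]] .
  qed
  have dom: "\<And>i \<mu>. i < n \<Longrightarrow> (-\<infinity> < epf (cs!i) \<mu>) = (vlow (cs!i) \<le> \<mu> \<and> \<mu> \<le> vhigh (cs!i))"
  proof -
    fix i \<mu> assume "i < n"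
    from IHi[OF this] have "{\<mu>::real. epf (cs!i) \<mu> > -\<infinity>} = {vlow (cs!i) .. vhigh (cs!i)}" by blast
    then show "(-\<infinity> < epf (cs!i) \<mu>) = (vlow (cs!i) \<le> \<mu> \<and> \<mu> \<le> vhigh (cs!i))"
      by (metis (mono_tags, lifting) atLeastAtMost_iff mem_Collect_eq)
  qed
  have lh: "\<And>i. i < n \<Longrightarrow> vlow (cs!i) \<le> vhigh (cs!i)" using IHi by blast
  have "\<forall>i. \<exists>M. i < n \<longrightarrow> (\<forall>\<mu>. epf (cs!i) \<mu> \<le> ereal M)" using IHi by blast
  then obtain Mf where Mf: "\<And>i \<mu>. i < n \<Longrightarrow> epf (cs!i) \<mu> \<le> ereal (Mf i)" by metis
  define M where "M = Max (Mf ` {0..<n})"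
  have MfM: "\<And>i. i < n \<Longrightarrow> Mf i \<le> M" unfolding M_def by (intro Max_ge) auto
  have gM: "\<And>i \<mu>. i < n \<Longrightarrow> g i \<mu> \<le> ereal M"
  proof -
    fix i \<mu> assume i: "i < n"
    have "g i \<mu> \<le> epf (cs!i) \<mu>" by (auto simp: g_def trunc_def)
    also have "\<dots> \<le> ereal (Mf i)" using Mf i .
    also have "\<dots> \<le> ereal M" using MfM i by simp
    finally show "g i \<mu> \<le> ereal M" .
  qed
  have setcs: "set cs = (\<lambda>i. cs ! i) ` {0..<n}" unfolding n_def
    by (auto simp: in_set_conv_nth)
  have fin: "finite (vhigh ` set cs)" "vhigh ` set cs \<noteq> {}"
    "finite (vlow ` set cs)" "vlow ` set cs \<noteq> {}" using ne by auto
  have b_eq: "b = Max (vhigh ` set cs)" unfolding b_def by simp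
  have hb: "\<And>i. i < n \<Longrightarrow> vhigh (cs!i) \<le> b" unfolding b_eq setcs
    using fin setcs by (intro Max_ge) auto
  obtain j where j: "j < n" "vhigh (cs!j) = b"
    using Max_in[OF fin(1,2)] b_eq setcs by auto
  obtain k where k: "k < n" "vlow (cs!k) = a"
  proof (cases p)
    case P1
    then have "a = Min (vlow ` set cs)" unfolding a_def by simp
    then show ?thesis using Min_in[OF fin(3,4)] setcs that by auto
  next
    case P2
    then have "a = Max (vlow ` set cs)" unfolding a_def by simp
    then show ?thesis using Max_in[OF fin(3,4)] setcs that by auto
  qed
  have ab: "a \<le> b" using lh[OF k(1)] hb[OF k(1)] k(2) by simp
  have beta_le: "\<And>i. i < n \<Longrightarrow> beta p cs i \<le> ereal a"
  proof -
    fix i assume "i < n"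
    show "beta p cs i \<le> ereal a"
    proof (cases p)
      case P1
      then show ?thesis by (simp add: beta_def)
    next
      case P2
      then have aM: "a = Max (vlow ` set cs)" unfolding a_def by simp
      have "\<And>j. j < n \<Longrightarrow> vlow (cs!j) \<le> a" unfolding aM
        using fin setcs by (intro Max_ge) auto
      then show ?thesis using P2 n_def
        by (auto simp: beta_def tau_def intro!: Sup_least)
    qed
  qed
  have gdom: "\<And>i \<mu>. i < n \<Longrightarrow> -\<infinity> < g i \<mu> \<Longrightarrow> a \<le> \<mu> \<and> \<mu> \<le> b"
  proof -
    fix i \<mu> assume i: "i < n" and gi: "-\<infinity> < g i \<mu>"
    have bet: "beta p cs i \<le> ereal \<mu>" and ep: "-\<infinity> < epf (cs!i) \<mu>"
      using gi by (auto simp: g_def trunc_def split: if_splits)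
    have lo: "vlow (cs!i) \<le> \<mu>" and up: "\<mu> \<le> vhigh (cs!i)" using dom[OF i, of \<mu>] ep by auto
    have "a \<le> \<mu>"
    proof (cases p)
      case P1
      then have "a = Min (vlow ` set cs)" unfolding a_def by simp
      then have "a \<le> vlow (cs!i)" using fin setcs i by (auto intro!: Min_le)
      then show ?thesis using lo by simp
    next
      case P2
      show ?thesis
      proof (cases "vlow (cs!i) = a")
        case True then show ?thesis using lo by simp
      next
        case False
        then have "k \<noteq> i" using k by auto
        then have "ereal a \<le> tau cs i" using k n_def unfolding tau_def
          by (intro Sup_upper) auto
        moreover have "tau cs i \<le> ereal \<mu>" using bet P2 by (simp add: beta_def)
        ultimately have "ereal a \<le> ereal \<mu>" by (rule order_trans)
        then show ?thesis by simp
      qed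
    qed
    then show "a \<le> \<mu> \<and> \<mu> \<le> b" using up hb[OF i] by simp
  qed
  have ga: "-\<infinity> < g k a"
  proof -
    have "-\<infinity> < epf (cs!k) a" using dom[OF k(1), of a] k(2) lh[OF k(1)] by simp
    then show ?thesis using beta_le[OF k(1)] by (simp add: g_def trunc_def)
  qed
  have gb: "-\<infinity> < g j b"
  proof -
    have "-\<infinity> < epf (cs!j) b" using dom[OF j(1), of b] j(2) lh[OF j(1)] by simp
    moreover have "beta p cs j \<le> ereal b" using beta_le[OF j(1)] ab
      by (simp add: order_trans)
    ultimately show ?thesis by (simp add: g_def trunc_def)
  qed
  obtain c1 where c1: "g k a = ereal c1" using ereal_realE[OF ga gM[OF k(1)]] by blast
  obtain c2 where c2: "g j b = ereal c2" using ereal_realE[OF gb gM[OF j(1)]] by blast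
  have E: "epf (Node p cs) = cenv (g ` {0..<n})"
    using set_map2_eq[of p cs] by (simp add: g_def n_def)
  define h where "h = (\<lambda>\<mu>. if a \<le> \<mu> \<and> \<mu> \<le> b then ereal M else -\<infinity>)"
  have hc: "concave_ext h" unfolding h_def by (rule box_concave)
  have hfin: "\<forall>x. h x < \<infinity>" by (simp add: h_def)
  have hdom: "\<forall>f\<in>g ` {0..<n}. \<forall>x. f x \<le> h x"
  proof (intro ballI allI)
    fix f x assume "f \<in> g ` {0..<n}"
    then obtain i where i: "i < n" "f = g i" by auto
    show "f x \<le> h x"
    proof (cases "-\<infinity> < g i x")
      case True
      then show ?thesis using gdom[OF i(1) True] gM[OF i(1)] i by (simp add: h_def)
    next
      case False
      then show ?thesis using i by simp
    qed
  qed
  have up: "\<And>\<mu>. epf (Node p cs) \<mu> \<le> h \<mu>" unfolding E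
    by (rule cenv_upper[OF hc hfin hdom])
  have "{\<mu>::real. epf (Node p cs) \<mu> > -\<infinity>} = {a..b}"
  proof (intro set_eqI iffI)
    fix \<mu> assume "\<mu> \<in> {\<mu>. -\<infinity> < epf (Node p cs) \<mu>}"
    then have "-\<infinity> < epf (Node p cs) \<mu>" by simp
    then have "-\<infinity> < h \<mu>" using up[of \<mu>] by (rule less_le_trans)
    then show "\<mu> \<in> {a..b}" by (auto simp: h_def split: if_splits)
  next
    fix \<mu> assume "\<mu> \<in> {a..b}"
    then have "ereal (min c1 c2) \<le> epf (Node p cs) \<mu>" unfolding E
      using k(1) j(1) c1 c2 by (intro cenv_lower[of "g k" _ "g j" a c1 b c2]) auto
    then show "\<mu> \<in> {\<mu>. -\<infinity> < epf (Node p cs) \<mu>}"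
    proof -
      have "-\<infinity> < ereal (min c1 c2)" by simp
      from less_le_trans[OF this \<open>ereal (min c1 c2) \<le> epf (Node p cs) \<mu>\<close>] show ?thesis by simp
    qed
  qed
  moreover have "\<forall>\<mu>. epf (Node p cs) \<mu> \<le> ereal M"
  proof
    fix \<mu>
    have "h \<mu> \<le> ereal M" by (simp add: h_def)
    then show "epf (Node p cs) \<mu> \<le> ereal M" using up[of \<mu>] by (rule order_trans[rotated])
  qed
  ultimately show ?case using ab a_def b_def by blast
qed

theorem lemma3:
  fixes T s :: gtree
  assumes "wf_game T"
    and "s \<in> states T"
  shows "{\<mu>::real. epf s \<mu> > -\<infinity>} = {vlow s .. vhigh s}"
  using main[OF wf_states[OF assms]] by blast

end
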